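(* Let $i,j\in[s]$. If $\varphi$ is a homomorphism from $F_i^{\bullet\bullet}$ to $F_j^{\bullet\bullet}$ (both viewed as ordinary digraphs), then $\varphi(z_i),\varphi(w_i)\in\{z_j,w_j\}$.
   Context: All digraphs are finite and loopless; a tournament is a digraph in which every pair of distinct vertices is joined by exactly one arc. A homomorphism from a digraph $F$ to a digraph $H$ is a map $\varphi:V(F)\to V(H)$ with $(\varphi(u),\varphi(v))\in E(H)$ whenever $(u,v)\in E(F)$. Construction of $F_i^{\bullet\bullet}$: fix $s\in\mathbb{N}^+$, a positive integer $m$, and a tournament $F_0$ on vertex set $[m]$ satisfying: (I) every vertex has out-degree and in-degree at most $2m/3$; (II) there are no disjoint $A_1,A_2\subseteq[m]$ with $|A_1|=|A_2|=\lceil\sqrt m\,\rceil$ such that $(a_1,a_2)$ is an arc for all $a_1\in A_1,a_2\in A_2$; (III) for every $S\subseteq[m]$ with $|S|\ge 2m/13-\sqrt m$, $F_0[S]$ contains a directed cycle. Let $k_1,\dots,k_s$ be integers in the open interval $(2m/3+2,\,5m/6)$ with $k_i>k_{i+1}+1$ for $1\le i<s$. For $i\in[s]$, $F_i^{\bullet\bullet}$ is the digraph on vertex set $[m]\cup\{z_i,w_i\}$ ($z_i,w_i$ two new vertices, called roots) whose arcs are all arcs of $F_0$, together with the arcs $z_i\to v$ and $v\to w_i$ for every $1\le v\le k_i$, and the arcs $u\to z_i$ and $w_i\to u$ for every $k_i<u\le m$. There is no arc between $z_i$ and $w_i$. *)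

theory Defs
  imports Complex_Main
begin

text \<open>Vertices of the rooted digraphs: the vertices 1..m of F_0 (Orig v),
  and the two roots (Zr = z_i, Wr = w_i).  Each F_i^{bullet bullet} is a separate
  digraph, so its roots are named Zr/Wr within that digraph.\<close>
datatype vtx = Orig nat | Zr | Wr

definition is_tournament :: "nat set \<Rightarrow> (nat \<times> nat) set \<Rightarrow> bool" where
  "is_tournament V E \<longleftrightarrow> E \<subseteq> V \<times> V \<and> (\<forall>v. (v, v) \<notin> E) \<and>
     (\<forall>u\<in>V. \<forall>v\<in>V. u \<noteq> v \<longrightarrow> ((u, v) \<in> E \<longleftrightarrow> (v, u) \<notin> E))"

definition out_deg :: "(nat \<times> nat) set \<Rightarrow> nat \<Rightarrow> nat" where
  "out_deg E u = card {v. (u, v) \<in> E}"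

definition in_deg :: "(nat \<times> nat) set \<Rightarrow> nat \<Rightarrow> nat" where
  "in_deg E u = card {v. (v, u) \<in> E}"

definition has_dicycle_in :: "(nat \<times> nat) set \<Rightarrow> nat set \<Rightarrow> bool" where
  "has_dicycle_in E S \<longleftrightarrow> (\<exists>cs. distinct cs \<and> length cs \<ge> 2 \<and> set cs \<subseteq> S \<and>
     (\<forall>t < length cs - 1. (cs ! t, cs ! Suc t) \<in> E) \<and> (last cs, hd cs) \<in> E)"

definition Fdd_verts :: "nat \<Rightarrow> vtx set" where
  "Fdd_verts m = Orig ` {1..m} \<union> {Zr, Wr}"

definition Fdd_arcs :: "(nat \<times> nat) set \<Rightarrow> nat \<Rightarrow> nat \<Rightarrow> (vtx \<times> vtx) set" where
  "Fdd_arcs E0 m k =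
     {(Orig u, Orig v) | u v. (u, v) \<in> E0}
   \<union> {(Zr, Orig v) | v. 1 \<le> v \<and> v \<le> k}
   \<union> {(Orig v, Wr) | v. 1 \<le> v \<and> v \<le> k}
   \<union> {(Orig u, Zr) | u. k < u \<and> u \<le> m}
   \<union> {(Wr, Orig u) | u. k < u \<and> u \<le> m}"

definition is_hom :: "'a set \<Rightarrow> ('a \<times> 'a) set \<Rightarrow> 'b set \<Rightarrow> ('b \<times> 'b) set \<Rightarrow> ('a \<Rightarrow> 'b) \<Rightarrow> bool" where
  "is_hom VF EF VH EH \<phi> \<longleftrightarrow> (\<forall>x\<in>VF. \<phi> x \<in> VH) \<and> (\<forall>(u, v)\<in>EF. (\<phi> u, \<phi> v) \<in> EH)"

end

theory Submission
  imports Defs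
begin

lemma arcE0: "(u, v) \<in> E0 \<Longrightarrow> (Orig u, Orig v) \<in> Fdd_arcs E0 m k"
  by (simp add: Fdd_arcs_def)
lemma arcZ: "1 \<le> v \<Longrightarrow> v \<le> k \<Longrightarrow> (Zr, Orig v) \<in> Fdd_arcs E0 m k"
  by (simp add: Fdd_arcs_def)
lemma arcW: "1 \<le> v \<Longrightarrow> v \<le> k \<Longrightarrow> (Orig v, Wr) \<in> Fdd_arcs E0 m k"
  by (simp add: Fdd_arcs_def)
lemma outOrig: "(Orig v, y) \<in> Fdd_arcs E0 m k \<Longrightarrow> y \<in> Orig ` {x. (v, x) \<in> E0} \<union> {Zr, Wr}"
  by (cases y) (auto simp: Fdd_arcs_def)
lemma inOrig: "(y, Orig v) \<in> Fdd_arcs E0 m k \<Longrightarrow> y \<in> Orig ` {x. (x, v) \<in> E0} \<union> {Zr, Wr}"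
  by (cases y) (auto simp: Fdd_arcs_def)
lemma no_loop_arcs:
  assumes "\<forall>v. (v, v) \<notin> E0"
  shows "(x, x) \<notin> Fdd_arcs E0 m k"
  using assms by (cases x) (auto simp: Fdd_arcs_def)

lemma card_bound:
  assumes "inj_on f K" "f ` K \<subseteq> Orig ` N \<union> {Zr, Wr}" "finite N"
  shows "card K \<le> card N + 2"
proof -
  have "card K = card (f ` K)" using assms(1) by (simp add: card_image)
  also have "\<dots> \<le> card (Orig ` N \<union> {Zr, Wr})"
    by (rule card_mono) (use assms in auto)
  also have "\<dots> \<le> card (Orig ` N) + card {Zr, Wr}" by (rule card_Un_le)
  also have "\<dots> \<le> card N + 2" using card_image_le[OF assms(3), of Orig] by (simp add: card_insert_if)
  finally show ?thesis .
qed

theorem claim4p4: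
  fixes s m :: nat and E0 :: "(nat \<times> nat) set" and k :: "nat \<Rightarrow> nat"
    and i j :: nat and \<phi> :: "vtx \<Rightarrow> vtx"
  assumes s_pos: "s \<ge> 1" and m_pos: "m \<ge> 1"
    and tour: "is_tournament {1..m} E0"
    and degI: "\<forall>u\<in>{1..m}. real (out_deg E0 u) \<le> 2 * real m / 3 \<and> real (in_deg E0 u) \<le> 2 * real m / 3"
    and condII: "\<not> (\<exists>A1 A2. A1 \<subseteq> {1..m} \<and> A2 \<subseteq> {1..m} \<and> A1 \<inter> A2 = {} \<and>
                    card A1 = nat \<lceil>sqrt (real m)\<rceil> \<and> card A2 = nat \<lceil>sqrt (real m)\<rceil> \<and>
                    (\<forall>a1\<in>A1. \<forall>a2\<in>A2. (a1, a2) \<in> E0))"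
    and condIII: "\<forall>S. S \<subseteq> {1..m} \<and> real (card S) \<ge> 2 * real m / 13 - sqrt (real m)
                    \<longrightarrow> has_dicycle_in E0 S"
    and k_range: "\<forall>t\<in>{1..s}. 2 * real m / 3 + 2 < real (k t) \<and> real (k t) < 5 * real m / 6"
    and k_dec: "\<forall>t. 1 \<le> t \<and> t < s \<longrightarrow> k t > k (Suc t) + 1"
    and ij: "i \<in> {1..s}" "j \<in> {1..s}"
    and hom: "is_hom (Fdd_verts m) (Fdd_arcs E0 m (k i)) (Fdd_verts m) (Fdd_arcs E0 m (k j)) \<phi>"
  shows "\<phi> Zr \<in> {Zr, Wr} \<and> \<phi> Wr \<in> {Zr, Wr}"
proof -
  have T: "E0 \<subseteq> {1..m} \<times> {1..m} \<and> (\<forall>v. (v, v) \<notin> E0) \<and>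
     (\<forall>u\<in>{1..m}. \<forall>v\<in>{1..m}. u \<noteq> v \<longrightarrow> ((u, v) \<in> E0 \<longleftrightarrow> (v, u) \<notin> E0))"
    using tour unfolding is_tournament_def .
  have Esub: "E0 \<subseteq> {1..m} \<times> {1..m}" using T by (rule conjunct1)
  have noloop: "\<forall>v. (v, v) \<notin> E0" using T by (elim conjE)
  have tot: "\<forall>u\<in>{1..m}. \<forall>v\<in>{1..m}. u \<noteq> v \<longrightarrow> ((u, v) \<in> E0 \<longleftrightarrow> (v, u) \<notin> E0)"
    using T by (elim conjE)
  have hv: "\<forall>x\<in>Fdd_verts m. \<phi> x \<in> Fdd_verts m"
    and ha: "\<And>u v. (u, v) \<in> Fdd_arcs E0 m (k i) \<Longrightarrow> (\<phi> u, \<phi> v) \<in> Fdd_arcs E0 m (k j)"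
    using hom unfolding is_hom_def by fast+
  have ki: "2 * real m / 3 + 2 < real (k i)" "real (k i) < 5 * real m / 6"
    using bspec[OF k_range ij(1)] by blast+
  have "real (k i) < real m" using ki(2) of_nat_0_le_iff[of m] by linarith
  hence kim: "k i \<le> m" by simp
  define K where "K = {1..k i}"
  have KS: "K \<subseteq> {1..m}" unfolding K_def using kim by simp
  have cK: "card K = k i" using K_def by simp
  have inj: "inj_on (\<lambda>u. \<phi> (Orig u)) K"
  proof (rule inj_onI)
    fix u u' assume u: "u \<in> K" "u' \<in> K" and eq: "\<phi> (Orig u) = \<phi> (Orig u')"
    show "u = u'"
    proof (rule ccontr)
      assume ne: "u \<noteq> u'"
      have uu: "u \<in> {1..m}" "u' \<in> {1..m}" using u KS by auto
      have "((u, u') \<in> E0) = ((u', u) \<notin> E0)" using tot uu ne by blast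
      hence "(u, u') \<in> E0 \<or> (u', u) \<in> E0" by blast
      hence "(\<phi> (Orig u), \<phi> (Orig u')) \<in> Fdd_arcs E0 m (k j) \<or> (\<phi> (Orig u'), \<phi> (Orig u)) \<in> Fdd_arcs E0 m (k j)"
        using ha arcE0 by blast
      hence "(\<phi> (Orig u), \<phi> (Orig u)) \<in> Fdd_arcs E0 m (k j)" using eq by simp
      thus False using no_loop_arcs[OF noloop] by blast
    qed
  qed
  have Z: "\<phi> Zr \<in> {Zr, Wr}"
  proof (rule ccontr)
    assume nr: "\<phi> Zr \<notin> {Zr, Wr}"
    have "Zr \<in> Fdd_verts m" by (simp add: Fdd_verts_def)
    hence "\<phi> Zr \<in> Fdd_verts m" using hv by blast
    with nr obtain v where v: "\<phi> Zr = Orig v" "v \<in> {1..m}" by (auto simp: Fdd_verts_def)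
    define N where "N = {x. (v, x) \<in> E0}"
    have "N \<subseteq> {1..m}" using Esub unfolding N_def by blast
    hence Nfin: "finite N" by (rule finite_subset) simp
    have "(\<lambda>u. \<phi> (Orig u)) ` K \<subseteq> Orig ` N \<union> {Zr, Wr}"
    proof
      fix y assume "y \<in> (\<lambda>u. \<phi> (Orig u)) ` K"
      then obtain u where u: "u \<in> K" "y = \<phi> (Orig u)" by blast
      have "1 \<le> u" "u \<le> k i" using u(1) unfolding K_def by simp_all
      hence "(Zr, Orig u) \<in> Fdd_arcs E0 m (k i)" by (rule arcZ)
      hence "(Orig v, y) \<in> Fdd_arcs E0 m (k j)" using ha v(1) u(2) by metis
      thus "y \<in> Orig ` N \<union> {Zr, Wr}" unfolding N_def by (rule outOrig)
    qed
    from card_bound[OF inj this Nfin] have "k i \<le> out_deg E0 v + 2"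
      using cK by (simp add: out_deg_def N_def)
    moreover have "real (out_deg E0 v) \<le> 2 * real m / 3" using degI v(2) by blast
    ultimately show False using ki(1) by linarith
  qed
  have W: "\<phi> Wr \<in> {Zr, Wr}"
  proof (rule ccontr)
    assume nr: "\<phi> Wr \<notin> {Zr, Wr}"
    have "Wr \<in> Fdd_verts m" by (simp add: Fdd_verts_def)
    hence "\<phi> Wr \<in> Fdd_verts m" using hv by blast
    with nr obtain v where v: "\<phi> Wr = Orig v" "v \<in> {1..m}" by (auto simp: Fdd_verts_def)
    define N where "N = {x. (x, v) \<in> E0}"
    have "N \<subseteq> {1..m}" using Esub unfolding N_def by blast
    hence Nfin: "finite N" by (rule finite_subset) simp
    have "(\<lambda>u. \<phi> (Orig u)) ` K \<subseteq> Orig ` N \<union> {Zr, Wr}"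
    proof
      fix y assume "y \<in> (\<lambda>u. \<phi> (Orig u)) ` K"
      then obtain u where u: "u \<in> K" "y = \<phi> (Orig u)" by blast
      have "1 \<le> u" "u \<le> k i" using u(1) unfolding K_def by simp_all
      hence "(Orig u, Wr) \<in> Fdd_arcs E0 m (k i)" by (rule arcW)
      hence "(y, Orig v) \<in> Fdd_arcs E0 m (k j)" using ha v(1) u(2) by metis
      thus "y \<in> Orig ` N \<union> {Zr, Wr}" unfolding N_def by (rule inOrig)
    qed
    from card_bound[OF inj this Nfin] have "k i \<le> in_deg E0 v + 2"
      using cK by (simp add: in_deg_def N_def)
    moreover have "real (in_deg E0 v) \<le> 2 * real m / 3" using degI v(2) by blast
    ultimately show False using ki(1) by linarith
  qed
  show ?thesis using Z W by blast
qed

end
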